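(* In the binary setting below, define $\mathrm{CL}_{\mathrm{induced}}:=-\mathbb{E}[\mathrm{Var}(S-C\mid S_B)]$ and $\mathrm{GL}_{\mathrm{induced}}:=\mathbb{E}[\mathrm{Var}(C\mid S_B)]$. Then $$\mathrm{CL}_{\mathrm{induced}}+\mathrm{GL}_{\mathrm{induced}}=\mathbb{E}\big[2\,\mathrm{Cov}(S,C\mid S_B)-\mathrm{Var}(S\mid S_B)\big],$$ and $$-\mathbb{E}\Big[\sqrt{\mathrm{Var}(S\mid S_B)}\big(2\sqrt{\mathrm{Var}(C\mid S_B)}+\sqrt{\mathrm{Var}(S\mid S_B)}\big)\Big]\le \mathrm{CL}_{\mathrm{induced}}+\mathrm{GL}_{\mathrm{induced}}\le \mathbb{E}\Big[\sqrt{\mathrm{Var}(S\mid S_B)}\big(2\sqrt{\mathrm{Var}(C\mid S_B)}-\sqrt{\mathrm{Var}(S\mid S_B)}\big)\Big].$$ If moreover $[0,1]$ is divided into $N$ equal-width bins, then $$-\tfrac1N\mathbb{E}\big[\sqrt{C_B(1-C_B)}\big]-\tfrac{1}{4N^2}\le \mathrm{CL}_{\mathrm{induced}}+\mathrm{GL}_{\mathrm{induced}}\le \tfrac1N\mathbb{E}\big[\sqrt{C_B(1-C_B)}\big].$$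
   Context: Binary setting: $(X,Y)$ jointly distributed with $Y\in\{0,1\}$; $Q:=P(Y=1\mid X)$; $S=f(X)\in[0,1]$ is a classifier's confidence score for the positive class; $C:=\mathbb{E}[Q\mid S]$. Given a partition of $[0,1]$ into bins $\mathcal{B}_1,\dots,\mathcal{B}_J$ (intervals), the binned score $S_B$ equals $\mathbb{E}[S\mid S\in\mathcal{B}_j]$ on $\{S\in\mathcal{B}_j\}$, and $C_B:=\mathbb{E}[Q\mid S_B]=\mathbb{E}[C\mid S_B]$. $\mathrm{Var}(\cdot\mid S_B)$ and $\mathrm{Cov}(\cdot,\cdot\mid S_B)$ denote ordinary conditional variance and covariance. "$N$ equal-width bins" means the bins are the intervals of length $1/N$ partitioning $[0,1]$. *)

theory Defs
  imports "HOL-Probability.Probability"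
begin

definition cond_var :: "'a measure \<Rightarrow> 'a measure \<Rightarrow> ('a \<Rightarrow> real) \<Rightarrow> 'a \<Rightarrow> real" where
  "cond_var M F Z = real_cond_exp M F (\<lambda>\<omega>. (Z \<omega> - real_cond_exp M F Z \<omega>)\<^sup>2)"

definition cond_cov :: "'a measure \<Rightarrow> 'a measure \<Rightarrow> ('a \<Rightarrow> real) \<Rightarrow> ('a \<Rightarrow> real) \<Rightarrow> 'a \<Rightarrow> real" where
  "cond_cov M F Z W = real_cond_exp M F
     (\<lambda>\<omega>. (Z \<omega> - real_cond_exp M F Z \<omega>) * (W \<omega> - real_cond_exp M F W \<omega>))"

definition post_Q :: "'a measure \<Rightarrow> 'x measure \<Rightarrow> ('a \<Rightarrow> 'x) \<Rightarrow> ('a \<Rightarrow> nat) \<Rightarrow> 'a \<Rightarrow> real" where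
  "post_Q M MX X Y = real_cond_exp M (vimage_algebra (space M) X MX)
     (\<lambda>\<omega>. if Y \<omega> = 1 then 1 else 0)"

definition calib_C :: "'a measure \<Rightarrow> ('a \<Rightarrow> real) \<Rightarrow> ('a \<Rightarrow> real) \<Rightarrow> 'a \<Rightarrow> real" where
  "calib_C M S Q = real_cond_exp M (vimage_algebra (space M) S borel) Q"

text \<open>Binned score: S_B = E[S | S \<in> B_j] on the event S \<in> B_j (bins B 0, ..., B (J-1)).\<close>
definition binned :: "'a measure \<Rightarrow> nat \<Rightarrow> (nat \<Rightarrow> real set) \<Rightarrow> ('a \<Rightarrow> real) \<Rightarrow> 'a \<Rightarrow> real" where
  "binned M J B S = (\<lambda>\<omega>. \<Sum>j<J. indicator (B j) (S \<omega>) *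
      ((\<integral>\<omega>'. S \<omega>' * indicator (B j) (S \<omega>') \<partial>M)
       / measure M {\<omega>'\<in>space M. S \<omega>' \<in> B j}))"

definition gen_sigma :: "'a measure \<Rightarrow> ('a \<Rightarrow> real) \<Rightarrow> 'a measure" where
  "gen_sigma M Z = vimage_algebra (space M) Z borel"

end

theory Submission
  imports Defs
begin

definition bd :: "'a measure \<Rightarrow> ('a \<Rightarrow> real) \<Rightarrow> bool" where
  "bd M g \<longleftrightarrow> g \<in> borel_measurable M \<and> (\<exists>K. AE x in M. \<bar>g x\<bar> \<le> K)"

context prob_space
begin

lemma bd_int: "bd M g \<Longrightarrow> integrable M g"
  unfolding bd_def using integrable_const_bound[of g] by (auto simp: real_norm_def)

lemma bd_meas: "bd M g \<Longrightarrow> g \<in> borel_measurable M"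
  unfolding bd_def by auto

lemma bd_const: "bd M (\<lambda>x. c)"
  unfolding bd_def by (intro conjI exI[of _ "\<bar>c\<bar>"] borel_measurable_const AE_I2) simp

lemma bd_add: "bd M g \<Longrightarrow> bd M h \<Longrightarrow> bd M (\<lambda>x. g x + h x)"
  unfolding bd_def
proof (elim conjE exE, intro conjI)
  fix K L assume "g \<in> borel_measurable M" "h \<in> borel_measurable M"
    and K: "AE x in M. \<bar>g x\<bar> \<le> K" and L: "AE x in M. \<bar>h x\<bar> \<le> L"
  show "(\<lambda>x. g x + h x) \<in> borel_measurable M" using \<open>g \<in> borel_measurable M\<close> \<open>h \<in> borel_measurable M\<close> by measurable
  have "AE x in M. \<bar>g x + h x\<bar> \<le> K + L" using K L by eventually_elim auto
  then show "\<exists>K. AE x in M. \<bar>g x + h x\<bar> \<le> K" by blast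
qed

lemma bd_mult: "bd M g \<Longrightarrow> bd M h \<Longrightarrow> bd M (\<lambda>x. g x * h x)"
  unfolding bd_def
proof (elim conjE exE, intro conjI)
  fix K L assume "g \<in> borel_measurable M" "h \<in> borel_measurable M"
    and K: "AE x in M. \<bar>g x\<bar> \<le> K" and L: "AE x in M. \<bar>h x\<bar> \<le> L"
  show "(\<lambda>x. g x * h x) \<in> borel_measurable M" using \<open>g \<in> borel_measurable M\<close> \<open>h \<in> borel_measurable M\<close> by measurable
  have "AE x in M. \<bar>g x * h x\<bar> \<le> K * L" using K L
    by eventually_elim (auto simp: abs_mult intro: mult_mono)
  then show "\<exists>K. AE x in M. \<bar>g x * h x\<bar> \<le> K" by blast
qed

lemma bd_neg: "bd M g \<Longrightarrow> bd M (\<lambda>x. - g x)"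
  using bd_mult[OF bd_const[of "-1"], of g] by simp

lemma bd_diff: "bd M g \<Longrightarrow> bd M h \<Longrightarrow> bd M (\<lambda>x. g x - h x)"
  using bd_add[of g "\<lambda>x. - h x"] bd_neg[of h] by simp

lemma bd_sq: "bd M g \<Longrightarrow> bd M (\<lambda>x. (g x)\<^sup>2)"
  using bd_mult[of g g] by (simp add: power2_eq_square)

lemma bd_sqrt: "bd M g \<Longrightarrow> bd M (\<lambda>x. sqrt (g x))"
  unfolding bd_def
proof (elim conjE exE, intro conjI)
  fix K assume "g \<in> borel_measurable M" and K: "AE x in M. \<bar>g x\<bar> \<le> K"
  show "(\<lambda>x. sqrt (g x)) \<in> borel_measurable M" using \<open>g \<in> borel_measurable M\<close> by measurable
  have "AE x in M. \<bar>sqrt (g x)\<bar> \<le> sqrt K" using K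
  proof eventually_elim
    case (elim x)
    have "\<bar>sqrt (g x)\<bar> = sqrt \<bar>g x\<bar>"
      by (cases "g x \<ge> 0") (auto simp: real_sqrt_minus[symmetric])
    also have "\<dots> \<le> sqrt K" using elim by (rule real_sqrt_le_mono)
    finally show ?case .
  qed
  then show "\<exists>K. AE x in M. \<bar>sqrt (g x)\<bar> \<le> K" by blast
qed

end

locale psub = prob_space M for M :: "'a measure" +
  fixes F :: "'a measure"
  assumes subalg: "subalgebra M F"

sublocale psub \<subseteq> finite_measure_subalgebra M F
  by unfold_locales (rule subalg)

context psub
begin

lemma bd_ce: "bd M g \<Longrightarrow> bd M (real_cond_exp M F g)"
proof -
  assume g: "bd M g"
  then obtain K where K: "AE x in M. \<bar>g x\<bar> \<le> K" unfolding bd_def by auto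
  have i: "integrable M g" using g bd_int by auto
  have "AE x in M. g x \<le> K" using K by auto
  from real_cond_exp_le_c[OF i this]
  have 1: "AE x in M. real_cond_exp M F g x \<le> K" .
  have "AE x in M. g x \<ge> -K" using K by auto
  from real_cond_exp_ge_c[OF i this]
  have 2: "AE x in M. real_cond_exp M F g x \<ge> -K" .
  have "AE x in M. \<bar>real_cond_exp M F g x\<bar> \<le> K" using 1 2 by eventually_elim auto
  then show ?thesis unfolding bd_def by auto
qed

lemma bd_var: "bd M Z \<Longrightarrow> bd M (cond_var M F Z)"
  unfolding cond_var_def by (rule bd_ce, rule bd_sq, rule bd_diff, assumption, rule bd_ce, assumption)

lemma bd_cov: "bd M Z \<Longrightarrow> bd M W \<Longrightarrow> bd M (cond_cov M F Z W)"
  unfolding cond_cov_def by (rule bd_ce, rule bd_mult; rule bd_diff, assumption, rule bd_ce, assumption)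


lemma var_diff:
  assumes Z: "bd M Z" and W: "bd M W"
  shows "AE x in M. cond_var M F (\<lambda>x. Z x - W x) x
     = cond_var M F Z x + cond_var M F W x - 2 * cond_cov M F Z W x"
proof -
  define mZ where "mZ = real_cond_exp M F Z"
  define mW where "mW = real_cond_exp M F W"
  define D where "D = (\<lambda>x. Z x - mZ x)"
  define E where "E = (\<lambda>x. W x - mW x)"
  have bmZ: "bd M mZ" unfolding mZ_def by (rule bd_ce[OF Z])
  have bmW: "bd M mW" unfolding mW_def by (rule bd_ce[OF W])
  have bD: "bd M D" unfolding D_def by (rule bd_diff[OF Z bmZ])
  have bE: "bd M E" unfolding E_def by (rule bd_diff[OF W bmW])
  have bZW: "bd M (\<lambda>x. Z x - W x)" by (rule bd_diff[OF Z W])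
  have bD2: "bd M (\<lambda>x. (D x)\<^sup>2)" by (rule bd_sq[OF bD])
  have bE2: "bd M (\<lambda>x. (E x)\<^sup>2)" by (rule bd_sq[OF bE])
  have bDE: "bd M (\<lambda>x. D x * E x)" by (rule bd_mult[OF bD bE])
  have bDE2: "bd M (\<lambda>x. 2 * (D x * E x))" by (rule bd_mult[OF bd_const bDE])
  have bS: "bd M (\<lambda>x. (D x)\<^sup>2 + (E x)\<^sup>2)" by (rule bd_add[OF bD2 bE2])
  have bT: "bd M (\<lambda>x. (D x)\<^sup>2 + (E x)\<^sup>2 - 2 * (D x * E x))" by (rule bd_diff[OF bS bDE2])
  have bL: "bd M (\<lambda>x. (Z x - W x - real_cond_exp M F (\<lambda>x. Z x - W x) x)\<^sup>2)"
    by (rule bd_sq, rule bd_diff[OF bZW], rule bd_ce[OF bZW])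
  have 1: "AE x in M. real_cond_exp M F (\<lambda>x. Z x - W x) x = mZ x - mW x"
    unfolding mZ_def mW_def by (rule real_cond_exp_diff[OF bd_int[OF Z] bd_int[OF W]])
  have 2: "AE x in M. (Z x - W x - real_cond_exp M F (\<lambda>x. Z x - W x) x)\<^sup>2
      = (D x)\<^sup>2 + (E x)\<^sup>2 - 2 * (D x * E x)"
    using 1
  proof eventually_elim
    case (elim x)
    show ?case by (subst elim) (simp add: D_def E_def power2_eq_square algebra_simps)
  qed
  have 3: "AE x in M. cond_var M F (\<lambda>x. Z x - W x) x
      = real_cond_exp M F (\<lambda>x. (D x)\<^sup>2 + (E x)\<^sup>2 - 2 * (D x * E x)) x"
    unfolding cond_var_def by (rule real_cond_exp_cong[OF 2 bd_meas[OF bL] bd_meas[OF bT]])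
  have 4: "AE x in M. real_cond_exp M F (\<lambda>x. (D x)\<^sup>2 + (E x)\<^sup>2 - 2 * (D x * E x)) x
     = real_cond_exp M F (\<lambda>x. (D x)\<^sup>2 + (E x)\<^sup>2) x - real_cond_exp M F (\<lambda>x. 2 * (D x * E x)) x"
    by (rule real_cond_exp_diff[OF bd_int[OF bS] bd_int[OF bDE2]])
  have 5: "AE x in M. real_cond_exp M F (\<lambda>x. (D x)\<^sup>2 + (E x)\<^sup>2) x
     = real_cond_exp M F (\<lambda>x. (D x)\<^sup>2) x + real_cond_exp M F (\<lambda>x. (E x)\<^sup>2) x"
    by (rule real_cond_exp_add[OF bd_int[OF bD2] bd_int[OF bE2]])
  have 6: "AE x in M. real_cond_exp M F (\<lambda>x. 2 * (D x * E x)) x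
     = 2 * real_cond_exp M F (\<lambda>x. D x * E x) x"
    by (rule real_cond_exp_cmult[OF bd_int[OF bDE]])
  have vZ: "cond_var M F Z = real_cond_exp M F (\<lambda>x. (D x)\<^sup>2)"
    unfolding cond_var_def D_def mZ_def ..
  have vW: "cond_var M F W = real_cond_exp M F (\<lambda>x. (E x)\<^sup>2)"
    unfolding cond_var_def E_def mW_def ..
  have cZW: "cond_cov M F Z W = real_cond_exp M F (\<lambda>x. D x * E x)"
    unfolding cond_cov_def D_def E_def mZ_def mW_def ..
  show ?thesis unfolding vZ vW cZW using 3 4 5 6 by eventually_elim simp
qed

lemma cond_var_nonneg:
  assumes Z: "bd M Z"
  shows "AE x in M. 0 \<le> cond_var M F Z x"
  unfolding cond_var_def
  by (rule real_cond_exp_pos) (auto intro!: bd_meas bd_sq bd_diff Z bd_ce)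

end

lemma quad_lemma:
  fixes a b c :: real
  assumes a: "0 \<le> a" and b: "0 \<le> b" and h: "\<forall>t\<in>\<rat>. 0 \<le> a - 2*t*c + t\<^sup>2*b"
  shows "\<bar>c\<bar> \<le> sqrt a * sqrt b"
proof -
  have h': "0 \<le> a - 2*t*c + t\<^sup>2*b" for t
  proof -
    have "continuous_on (closure \<rat>) (\<lambda>t. a - 2*t*c + t\<^sup>2*b)" by (intro continuous_intros)
    then show ?thesis
      using continuous_ge_on_closure[of \<rat> "\<lambda>t. a - 2*t*c + t\<^sup>2*b" t 0] h Rats_closure_real by auto
  qed
  have "c\<^sup>2 \<le> a*b"
  proof (cases "b = 0")
    case True
    show ?thesis
    proof (rule ccontr)
      assume "\<not> ?thesis" then have "c \<noteq> 0" using True by simp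
      from h'[of "(a+1)/(2*c)"] have "0 \<le> a - (a+1)" using True \<open>c\<noteq>0\<close> by (simp add: field_simps)
      then show False by simp
    qed
  next
    case False then have "b > 0" using b by simp
    from h'[of "c/b"] have "0 \<le> a - 2*(c/b)*c + (c/b)\<^sup>2*b" .
    also have "\<dots> = a - c\<^sup>2/b" using \<open>b>0\<close> by (simp add: field_simps power2_eq_square)
    finally show ?thesis using \<open>b>0\<close> by (simp add: field_simps)
  qed
  then have "sqrt (c\<^sup>2) \<le> sqrt (a*b)" by (rule real_sqrt_le_mono)
  then show ?thesis by (simp add: real_sqrt_mult)
qed


context psub
begin

lemma cond_cs:
  assumes Z: "bd M Z" and W: "bd M W"
  shows "AE x in M. \<bar>cond_cov M F Z W x\<bar> \<le> sqrt (cond_var M F Z x) * sqrt (cond_var M F W x)"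
proof -
  define mZ where "mZ = real_cond_exp M F Z"
  define mW where "mW = real_cond_exp M F W"
  define D where "D = (\<lambda>x. Z x - mZ x)"
  define E where "E = (\<lambda>x. W x - mW x)"
  have bmZ: "bd M mZ" unfolding mZ_def by (rule bd_ce[OF Z])
  have bmW: "bd M mW" unfolding mW_def by (rule bd_ce[OF W])
  have bD: "bd M D" unfolding D_def by (rule bd_diff[OF Z bmZ])
  have bE: "bd M E" unfolding E_def by (rule bd_diff[OF W bmW])
  have bD2: "bd M (\<lambda>x. (D x)\<^sup>2)" by (rule bd_sq[OF bD])
  have bE2: "bd M (\<lambda>x. (E x)\<^sup>2)" by (rule bd_sq[OF bE])
  have bDE: "bd M (\<lambda>x. D x * E x)" by (rule bd_mult[OF bD bE])
  have vZ: "cond_var M F Z = real_cond_exp M F (\<lambda>x. (D x)\<^sup>2)"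
    unfolding cond_var_def D_def mZ_def ..
  have vW: "cond_var M F W = real_cond_exp M F (\<lambda>x. (E x)\<^sup>2)"
    unfolding cond_var_def E_def mW_def ..
  have cZW: "cond_cov M F Z W = real_cond_exp M F (\<lambda>x. D x * E x)"
    unfolding cond_cov_def D_def E_def mZ_def mW_def ..
  have q: "AE x in M. 0 \<le> cond_var M F Z x - 2*t*cond_cov M F Z W x + t\<^sup>2 * cond_var M F W x" for t
  proof -
    have b1: "bd M (\<lambda>x. (-2*t) * (D x * E x))" by (rule bd_mult[OF bd_const bDE])
    have b2: "bd M (\<lambda>x. t\<^sup>2 * (E x)\<^sup>2)" by (rule bd_mult[OF bd_const bE2])
    have b3: "bd M (\<lambda>x. (D x)\<^sup>2 + (-2*t) * (D x * E x))" by (rule bd_add[OF bD2 b1])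
    have eq: "(\<lambda>x. (D x - t * E x)\<^sup>2) = (\<lambda>x. (D x)\<^sup>2 + (-2*t) * (D x * E x) + t\<^sup>2 * (E x)\<^sup>2)"
      by (rule ext) (simp add: power2_eq_square algebra_simps)
    have pos: "AE x in M. 0 \<le> real_cond_exp M F (\<lambda>x. (D x - t * E x)\<^sup>2) x"
      by (rule real_cond_exp_pos) (auto intro!: bd_meas bd_sq bd_diff bD bE bd_mult bd_const)
    have a1: "AE x in M. real_cond_exp M F (\<lambda>x. (D x)\<^sup>2 + (-2*t) * (D x * E x) + t\<^sup>2 * (E x)\<^sup>2) x
       = real_cond_exp M F (\<lambda>x. (D x)\<^sup>2 + (-2*t) * (D x * E x)) x + real_cond_exp M F (\<lambda>x. t\<^sup>2 * (E x)\<^sup>2) x"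
      by (rule real_cond_exp_add[OF bd_int[OF b3] bd_int[OF b2]])
    have a2: "AE x in M. real_cond_exp M F (\<lambda>x. (D x)\<^sup>2 + (-2*t) * (D x * E x)) x
       = real_cond_exp M F (\<lambda>x. (D x)\<^sup>2) x + real_cond_exp M F (\<lambda>x. (-2*t) * (D x * E x)) x"
      by (rule real_cond_exp_add[OF bd_int[OF bD2] bd_int[OF b1]])
    have a3: "AE x in M. real_cond_exp M F (\<lambda>x. (-2*t) * (D x * E x)) x
       = (-2*t) * real_cond_exp M F (\<lambda>x. D x * E x) x"
      by (rule real_cond_exp_cmult[OF bd_int[OF bDE]])
    have a4: "AE x in M. real_cond_exp M F (\<lambda>x. t\<^sup>2 * (E x)\<^sup>2) x
       = t\<^sup>2 * real_cond_exp M F (\<lambda>x. (E x)\<^sup>2) x"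
      by (rule real_cond_exp_cmult[OF bd_int[OF bE2]])
    show ?thesis unfolding vZ vW cZW using pos a1 a2 a3 a4 unfolding eq
      by eventually_elim simp
  qed
  have "AE x in M. \<forall>t\<in>\<rat>. 0 \<le> cond_var M F Z x - 2*t*cond_cov M F Z W x + t\<^sup>2 * cond_var M F W x"
    unfolding AE_ball_countable[OF countable_rat] using q by blast
  then show ?thesis using cond_var_nonneg[OF Z] cond_var_nonneg[OF W]
    by eventually_elim (rule quad_lemma)
qed

lemma bhatia_davis:
  assumes Z: "bd M Z" and a: "bd M a" "a \<in> borel_measurable F"
    and b: "bd M b" "b \<in> borel_measurable F"
    and ab: "AE x in M. a x \<le> Z x \<and> Z x \<le> b x"
  shows "AE x in M. cond_var M F Z x \<le> (real_cond_exp M F Z x - a x) * (b x - real_cond_exp M F Z x)"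
proof -
  define m where "m = real_cond_exp M F Z"
  define D where "D = (\<lambda>x. Z x - m x)"
  define G where "G = (\<lambda>x. a x + b x - 2 * m x)"
  define H where "H = (\<lambda>x. (m x - a x) * (b x - m x))"
  have mF: "m \<in> borel_measurable F" unfolding m_def by (rule borel_measurable_cond_exp)
  have GF: "G \<in> borel_measurable F" unfolding G_def using mF a(2) b(2) by measurable
  have HF: "H \<in> borel_measurable F" unfolding H_def using mF a(2) b(2) by measurable
  have bm: "bd M m" unfolding m_def by (rule bd_ce[OF Z])
  have bD: "bd M D" unfolding D_def by (rule bd_diff[OF Z bm])
  have bG: "bd M G" unfolding G_def by (intro bd_diff bd_add bd_mult bd_const a b bm)
  have bH: "bd M H" unfolding H_def by (intro bd_diff bd_mult a b bm)
  have bGD: "bd M (\<lambda>x. G x * D x)" by (rule bd_mult[OF bG bD])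
  have bD2: "bd M (\<lambda>x. (D x)\<^sup>2)" by (rule bd_sq[OF bD])
  have bHGD: "bd M (\<lambda>x. H x + G x * D x)" by (rule bd_add[OF bH bGD])
  have eq: "(\<lambda>x. (Z x - a x) * (b x - Z x)) = (\<lambda>x. H x + G x * D x - (D x)\<^sup>2)"
    by (rule ext) (simp add: H_def G_def D_def power2_eq_square algebra_simps)
  have p: "AE x in M. 0 \<le> real_cond_exp M F (\<lambda>x. (Z x - a x) * (b x - Z x)) x"
  proof (rule real_cond_exp_pos)
    show "AE x in M. 0 \<le> (Z x - a x) * (b x - Z x)" using ab by eventually_elim simp
    show "(\<lambda>x. (Z x - a x) * (b x - Z x)) \<in> borel_measurable M"
      by (intro bd_meas bd_mult bd_diff Z a b)
  qed
  have e1: "AE x in M. real_cond_exp M F (\<lambda>x. H x + G x * D x - (D x)\<^sup>2) x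
     = real_cond_exp M F (\<lambda>x. H x + G x * D x) x - real_cond_exp M F (\<lambda>x. (D x)\<^sup>2) x"
    by (rule real_cond_exp_diff[OF bd_int[OF bHGD] bd_int[OF bD2]])
  have e2: "AE x in M. real_cond_exp M F (\<lambda>x. H x + G x * D x) x
     = real_cond_exp M F H x + real_cond_exp M F (\<lambda>x. G x * D x) x"
    by (rule real_cond_exp_add[OF bd_int[OF bH] bd_int[OF bGD]])
  have e3: "AE x in M. real_cond_exp M F H x = H x"
    by (rule real_cond_exp_F_meas[OF bd_int[OF bH] HF])
  have e4: "AE x in M. real_cond_exp M F (\<lambda>x. G x * D x) x = G x * real_cond_exp M F D x"
    by (rule real_cond_exp_mult[OF GF bd_meas[OF bD] bd_int[OF bGD]])
  have e5: "AE x in M. real_cond_exp M F D x = real_cond_exp M F Z x - real_cond_exp M F m x"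
    unfolding D_def by (rule real_cond_exp_diff[OF bd_int[OF Z] bd_int[OF bm]])
  have e6: "AE x in M. real_cond_exp M F m x = m x"
    by (rule real_cond_exp_F_meas[OF bd_int[OF bm] mF])
  have vZ: "cond_var M F Z = real_cond_exp M F (\<lambda>x. (D x)\<^sup>2)"
    unfolding cond_var_def D_def m_def ..
  show ?thesis unfolding vZ m_def[symmetric] using p e1 e2 e3 e4 e5 e6 unfolding eq
  proof eventually_elim
    case (elim x)
    then show ?case by (simp add: H_def m_def)
  qed
qed

end

context prob_space
begin

lemma bin_lemma:
  assumes S: "S \<in> borel_measurable M" and S01: "\<forall>\<omega>\<in>space M. 0 \<le> S \<omega> \<and> S \<omega> \<le> 1"
    and Bb: "Bj \<in> sets borel" and sub: "Bj \<subseteq> {lo..hi}"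
  defines "c \<equiv> (\<integral>\<omega>. S \<omega> * indicator Bj (S \<omega>) \<partial>M) / measure M {\<omega>\<in>space M. S \<omega> \<in> Bj}"
  shows "AE \<omega> in M. S \<omega> \<in> Bj \<longrightarrow> (lo \<le> c \<and> c \<le> hi \<and> (c = hi \<longrightarrow> S \<omega> = hi))"
proof -
  define N where "N = {\<omega>\<in>space M. S \<omega> \<in> Bj}"
  have NN: "N = S -` Bj \<inter> space M" unfolding N_def by auto
  have N: "N \<in> sets M" unfolding NN by (rule measurable_sets[OF S Bb])
  define ind where "ind = (\<lambda>\<omega>. indicator Bj (S \<omega>) :: real)"
  have ind_eq: "ind \<omega> = indicator N \<omega>" if "\<omega> \<in> space M" for \<omega>
    using that unfolding ind_def N_def by (auto simp: indicator_def)
  have indm: "ind \<in> borel_measurable M" unfolding ind_def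
    by (rule measurable_compose[OF S borel_measurable_indicator[OF Bb]])
  have bind: "bd M ind" unfolding bd_def
    by (intro conjI indm exI[of _ 1] AE_I2) (auto simp: ind_def indicator_def)
  have bS: "bd M S" unfolding bd_def
    by (intro conjI S exI[of _ 1] AE_I2) (use S01 in auto)
  have bSi: "bd M (\<lambda>\<omega>. S \<omega> * ind \<omega>)" by (rule bd_mult[OF bS bind])
  have intind: "(\<integral>\<omega>. ind \<omega> \<partial>M) = measure M N"
  proof -
    have "(\<integral>\<omega>. ind \<omega> \<partial>M) = (\<integral>\<omega>. indicator N \<omega> \<partial>M)"
      by (rule Bochner_Integration.integral_cong) (auto simp: ind_eq)
    also have "\<dots> = measure M N" using N by (simp add: Int_absorb2 sets.sets_into_space)
    finally show ?thesis .
  qed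
  define p where "p = measure M N"
  define I where "I = (\<integral>\<omega>. S \<omega> * ind \<omega> \<partial>M)"
  have c: "c = I / p" unfolding c_def I_def p_def N_def ind_def ..
  show ?thesis
  proof (cases "p = 0")
    case True
    have "emeasure M N = 0" using True unfolding p_def by (simp add: emeasure_eq_measure)
    then have "N \<in> null_sets M" using N by (intro null_setsI)
    from AE_not_in[OF this] AE_space show ?thesis
    proof eventually_elim
      case (elim \<omega>) then show ?case by (auto simp: N_def)
    qed
  next
    case False
    then have pp: "p > 0" unfolding p_def using measure_nonneg[of M N] by linarith
    have lo1: "(\<integral>\<omega>. lo * ind \<omega> \<partial>M) \<le> I" unfolding I_def
      by (rule integral_mono[OF bd_int[OF bd_mult[OF bd_const bind]] bd_int[OF bSi]])
         (use sub in \<open>auto simp: ind_def indicator_def\<close>)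
    have hi1: "I \<le> (\<integral>\<omega>. hi * ind \<omega> \<partial>M)" unfolding I_def
      by (rule integral_mono[OF bd_int[OF bSi] bd_int[OF bd_mult[OF bd_const bind]]])
         (use sub in \<open>auto simp: ind_def indicator_def\<close>)
    have lo2: "lo * p \<le> I" using lo1 intind by (simp add: p_def)
    have hi2: "I \<le> hi * p" using hi1 intind by (simp add: p_def)
    have clo: "lo \<le> c" unfolding c using lo2 pp by (simp add: le_divide_eq)
    have chi: "c \<le> hi" unfolding c using hi2 pp by (simp add: divide_le_eq)
    have ae: "AE \<omega> in M. c = hi \<longrightarrow> (S \<omega> \<in> Bj \<longrightarrow> S \<omega> = hi)"
    proof (cases "c = hi")
      case False then show ?thesis by simp
    next
      case True
      then have Ieq: "I = hi * p" unfolding c using pp by (simp add: field_simps)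
      have bg: "bd M (\<lambda>\<omega>. (hi - S \<omega>) * ind \<omega>)"
        by (rule bd_mult[OF bd_diff[OF bd_const bS] bind])
      have "(\<integral>\<omega>. (hi - S \<omega>) * ind \<omega> \<partial>M) = (\<integral>\<omega>. hi * ind \<omega> - S \<omega> * ind \<omega> \<partial>M)"
        by (simp add: algebra_simps)
      also have "\<dots> = (\<integral>\<omega>. hi * ind \<omega> \<partial>M) - I" unfolding I_def
        by (rule Bochner_Integration.integral_diff[OF bd_int[OF bd_mult[OF bd_const bind]] bd_int[OF bSi]])
      also have "\<dots> = 0" using Ieq intind by (simp add: p_def)
      finally have z: "(\<integral>\<omega>. (hi - S \<omega>) * ind \<omega> \<partial>M) = 0" .
      have nn: "AE \<omega> in M. 0 \<le> (hi - S \<omega>) * ind \<omega>"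
        by (rule AE_I2) (use sub in \<open>auto simp: ind_def indicator_def\<close>)
      have "AE \<omega> in M. (hi - S \<omega>) * ind \<omega> = 0"
        using integral_nonneg_eq_0_iff_AE[OF bd_int[OF bg] nn] z by simp
      then show ?thesis
      proof eventually_elim
        case (elim \<omega>) then show ?case by (auto simp: ind_def indicator_def)
      qed
    qed
    from ae show ?thesis
    proof eventually_elim
      case (elim \<omega>) then show ?case using clo chi by auto
    qed
  qed
qed

end

lemma sub_vimage:
  assumes g: "g \<in> measurable M N"
  shows "subalgebra M (vimage_algebra (space M) g N)"
proof -
  have sp: "g \<in> space M \<rightarrow> space N" using measurable_space[OF g] by auto
  have "sets (vimage_algebra (space M) g N) \<subseteq> sets M"
    unfolding sets_vimage_algebra2[OF sp] using measurable_sets[OF g] by auto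
  then show ?thesis unfolding subalgebra_def by simp
qed

lemma floor_case:
  fixes J j :: nat and c s :: real
  assumes J: "J > 0" and c1: "real j / real J \<le> c" and c2: "c \<le> real (Suc j) / real J"
    and s1: "real j / real J \<le> s" and s2: "s \<le> real (Suc j) / real J"
    and ch: "c = real (Suc j) / real J \<longrightarrow> s = real (Suc j) / real J"
  shows "real_of_int \<lfloor>real J * c\<rfloor> / real J \<le> s \<and> s \<le> real_of_int \<lfloor>real J * c\<rfloor> / real J + 1 / real J"
proof (cases "c = real (Suc j) / real J")
  case True
  then have "real J * c = real (Suc j)" using J by simp
  then have fl: "\<lfloor>real J * c\<rfloor> = int (Suc j)" by simp
  have ss: "s = real (Suc j) / real J" using True ch by simp
  show ?thesis unfolding fl ss using J by (simp add: divide_right_mono)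
next
  case False
  then have c2': "c < real (Suc j) / real J" using c2 by simp
  have "real j \<le> real J * c" using c1 J by (simp add: field_simps)
  moreover have "real J * c < real j + 1" using c2' J by (simp add: field_simps)
  ultimately have fl: "\<lfloor>real J * c\<rfloor> = int j" by (simp add: floor_eq_iff)
  have "real (Suc j) / real J = real j / real J + 1 / real J" by (simp add: add_divide_distrib)
  then show ?thesis unfolding fl using s1 s2 by simp
qed

lemma floor_bound:
  fixes y :: real and J :: nat
  assumes J: "J > 0"
  shows "\<bar>real_of_int \<lfloor>real J * y\<rfloor> / real J\<bar> \<le> \<bar>y\<bar> + 1"
proof -
  have a: "real_of_int \<lfloor>real J * y\<rfloor> \<le> real J * y" by (rule of_int_floor_le)
  have b: "real J * y - 1 < real_of_int \<lfloor>real J * y\<rfloor>" by (rule real_of_int_floor_gt_diff_one)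
  have J1: "real J \<ge> 1" using J by simp
  have "\<bar>real J * y\<bar> = real J * \<bar>y\<bar>" by (simp add: abs_mult)
  then have "\<bar>real_of_int \<lfloor>real J * y\<rfloor>\<bar> \<le> real J * \<bar>y\<bar> + real J" using a b J1 by linarith
  also have "\<dots> = real J * (\<bar>y\<bar> + 1)" by (simp add: algebra_simps)
  finally show ?thesis using J by (simp add: abs_divide divide_le_eq mult.commute)
qed

lemma am_gm_aux:
  fixes u v :: real shows "u * v \<le> ((u + v) / 2)\<^sup>2"
proof -
  have "0 \<le> (u - v)\<^sup>2" by simp
  then show ?thesis by (simp add: power2_eq_square field_simps)
qed

theorem theorem2:
  fixes M :: "'a measure" and MX :: "'x measure" and X :: "'a \<Rightarrow> 'x"
    and Y :: "'a \<Rightarrow> nat" and f :: "'x \<Rightarrow> real"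
    and J :: nat and B :: "nat \<Rightarrow> real set"
  assumes "prob_space M"
    and "X \<in> measurable M MX"
    and "Y \<in> measurable M (count_space UNIV)"
    and "\<forall>\<omega>\<in>space M. Y \<omega> \<in> {0, 1}"
    and "f \<in> borel_measurable MX"
    and "\<forall>x\<in>space MX. f x \<in> {0..1}"
    and "\<forall>j<J. is_interval (B j)"
    and "\<forall>i<J. \<forall>j<J. i \<noteq> j \<longrightarrow> B i \<inter> B j = {}"
    and "(\<Union>j<J. B j) = {0..1}"
  shows "let S = (\<lambda>\<omega>. f (X \<omega>));
             Q = post_Q M MX X Y;
             C = calib_C M S Q;
             FB = gen_sigma M (binned M J B S);
             CB = real_cond_exp M FB Q;
             CL = - (\<integral>\<omega>. cond_var M FB (\<lambda>\<omega>. S \<omega> - C \<omega>) \<omega> \<partial>M);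
             GL = (\<integral>\<omega>. cond_var M FB C \<omega> \<partial>M)
         in CL + GL = (\<integral>\<omega>. 2 * cond_cov M FB S C \<omega> - cond_var M FB S \<omega> \<partial>M)
          \<and> - (\<integral>\<omega>. sqrt (cond_var M FB S \<omega>) *
                (2 * sqrt (cond_var M FB C \<omega>) + sqrt (cond_var M FB S \<omega>)) \<partial>M) \<le> CL + GL
          \<and> CL + GL \<le> (\<integral>\<omega>. sqrt (cond_var M FB S \<omega>) *
                (2 * sqrt (cond_var M FB C \<omega>) - sqrt (cond_var M FB S \<omega>)) \<partial>M)
          \<and> ((\<forall>j<J. closure (B j) = {real j / real J .. real (Suc j) / real J}) \<longrightarrow>
               - (1 / real J) * (\<integral>\<omega>. sqrt (CB \<omega> * (1 - CB \<omega>)) \<partial>M) - 1 / (4 * (real J)\<^sup>2)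
                  \<le> CL + GL
               \<and> CL + GL \<le> (1 / real J) * (\<integral>\<omega>. sqrt (CB \<omega> * (1 - CB \<omega>)) \<partial>M))"
  proof -
  interpret prob_space M by (rule assms(1))
  have Xm: "X \<in> measurable M MX" by (rule assms(2))
  have Ym[measurable]: "Y \<in> measurable M (count_space UNIV)" by (rule assms(3))
  have fm: "f \<in> borel_measurable MX" by (rule assms(5))
  define S where "S = (\<lambda>\<omega>. f (X \<omega>))"
  have Sm: "S \<in> borel_measurable M" unfolding S_def by (rule measurable_compose[OF Xm fm])
  have S01: "\<forall>\<omega>\<in>space M. 0 \<le> S \<omega> \<and> S \<omega> \<le> 1"
    using measurable_space[OF Xm] assms(6) unfolding S_def by auto
  have bS: "bd M S" unfolding bd_def
    by (intro conjI Sm exI[of _ 1] AE_I2) (use S01 in auto)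
  have Jpos: "J > 0"
  proof (rule ccontr)
    assume "\<not> J > 0" then have "J = 0" by simp
    then show False using assms(9) by auto
  qed
  have Bb: "B j \<in> sets borel" if "j < J" for j
    using assms(7) that by (intro real_interval_borel_measurable) auto
  define cj where "cj j = (\<integral>\<omega>'. S \<omega>' * indicator (B j) (S \<omega>') \<partial>M)
       / measure M {\<omega>'\<in>space M. S \<omega>' \<in> B j}" for j
  define h where "h x = (\<Sum>j<J. indicator (B j) x * cj j)" for x
  define SB where "SB = binned M J B S"
  have SBh: "SB = (\<lambda>\<omega>. h (S \<omega>))" unfolding SB_def binned_def h_def cj_def ..
  have hm: "h \<in> borel_measurable borel" unfolding h_def
    by (intro borel_measurable_sum borel_measurable_times borel_measurable_const
        borel_measurable_indicator Bb) auto
  have SBm: "SB \<in> borel_measurable M" unfolding SBh by (rule measurable_compose[OF Sm hm])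
  define FB where "FB = gen_sigma M SB"
  have subFB: "subalgebra M FB" unfolding FB_def gen_sigma_def by (rule sub_vimage[OF SBm])
  define SigS where "SigS = vimage_algebra (space M) S borel"
  have subS: "subalgebra M SigS" unfolding SigS_def by (rule sub_vimage[OF Sm])
  define SigX where "SigX = vimage_algebra (space M) X MX"
  have subX: "subalgebra M SigX" unfolding SigX_def by (rule sub_vimage[OF Xm])
  have subSFB: "subalgebra SigS FB"
  proof -
    have sp1: "SB \<in> space M \<rightarrow> space borel" by simp
    have sp2: "S \<in> space M \<rightarrow> space borel" by simp
    have "sets FB \<subseteq> sets SigS"
    proof
      fix E assume "E \<in> sets FB"
      then obtain A where A: "A \<in> sets borel" and E: "E = SB -` A \<inter> space M"
        unfolding FB_def gen_sigma_def sets_vimage_algebra2[OF sp1] by auto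
      have hA: "h -` A \<in> sets borel" using measurable_sets[OF hm A] by simp
      have "E = S -` (h -` A) \<inter> space M" unfolding E SBh by auto
      then show "E \<in> sets SigS" unfolding SigS_def by (simp add: in_vimage_algebra[OF hA])
    qed
    then show ?thesis unfolding subalgebra_def FB_def gen_sigma_def SigS_def by simp
  qed
  interpret FBp: psub M FB using assms(1) subFB by (simp add: psub_def psub_axioms_def)
  interpret SSp: psub M SigS using assms(1) subS by (simp add: psub_def psub_axioms_def)
  interpret XXp: psub M SigX using assms(1) subX by (simp add: psub_def psub_axioms_def)
  define IY where "IY = (\<lambda>\<omega>. if Y \<omega> = 1 then 1 else (0::real))"
  have IYm: "IY \<in> borel_measurable M" unfolding IY_def by measurable
  have bIY: "bd M IY" unfolding bd_def
    by (intro conjI IYm exI[of _ 1] AE_I2) (auto simp: IY_def)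
  define Q where "Q = post_Q M MX X Y"
  have Qd: "Q = real_cond_exp M SigX IY" unfolding Q_def post_Q_def SigX_def IY_def ..
  have bQ: "bd M Q" unfolding Qd by (rule XXp.bd_ce[OF bIY])
  have Q0: "AE \<omega> in M. 0 \<le> Q \<omega>" unfolding Qd
    by (rule XXp.real_cond_exp_ge_c[OF bd_int[OF bIY]]) (auto simp: IY_def)
  have Q1: "AE \<omega> in M. Q \<omega> \<le> 1" unfolding Qd
    by (rule XXp.real_cond_exp_le_c[OF bd_int[OF bIY]]) (auto simp: IY_def)
  define C where "C = calib_C M S Q"
  have Cd: "C = real_cond_exp M SigS Q" unfolding C_def calib_C_def SigS_def ..
  have bC: "bd M C" unfolding Cd by (rule SSp.bd_ce[OF bQ])
  have C0: "AE \<omega> in M. 0 \<le> C \<omega>" unfolding Cd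
    by (rule SSp.real_cond_exp_ge_c[OF bd_int[OF bQ] Q0])
  have C1: "AE \<omega> in M. C \<omega> \<le> 1" unfolding Cd
    by (rule SSp.real_cond_exp_le_c[OF bd_int[OF bQ] Q1])
  define CB where "CB = real_cond_exp M FB Q"
  have bCB: "bd M CB" unfolding CB_def by (rule FBp.bd_ce[OF bQ])
  define VS where "VS = cond_var M FB S"
  define VC where "VC = cond_var M FB C"
  define Cv where "Cv = cond_cov M FB S C"
  define VD where "VD = cond_var M FB (\<lambda>\<omega>. S \<omega> - C \<omega>)"
  have bVS: "bd M VS" unfolding VS_def by (rule FBp.bd_var[OF bS])
  have bVC: "bd M VC" unfolding VC_def by (rule FBp.bd_var[OF bC])
  have bVD: "bd M VD" unfolding VD_def by (rule FBp.bd_var[OF bd_diff[OF bS bC]])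
  have bCv: "bd M Cv" unfolding Cv_def by (rule FBp.bd_cov[OF bS bC])
  have bR: "bd M (\<lambda>\<omega>. 2 * Cv \<omega> - VS \<omega>)" by (rule bd_diff[OF bd_mult[OF bd_const bCv] bVS])
  have bT: "bd M (\<lambda>\<omega>. VS \<omega> + VC \<omega> - 2 * Cv \<omega>)"
    by (rule bd_diff[OF bd_add[OF bVS bVC] bd_mult[OF bd_const bCv]])
  have sVS: "bd M (\<lambda>\<omega>. sqrt (VS \<omega>))" by (rule bd_sqrt[OF bVS])
  have sVC: "bd M (\<lambda>\<omega>. sqrt (VC \<omega>))" by (rule bd_sqrt[OF bVC])
  have eVD: "AE \<omega> in M. VD \<omega> = VS \<omega> + VC \<omega> - 2 * Cv \<omega>"
    unfolding VD_def VS_def VC_def Cv_def by (rule FBp.var_diff[OF bS bC])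
  have iVD: "(\<integral>\<omega>. VD \<omega> \<partial>M) = (\<integral>\<omega>. VS \<omega> + VC \<omega> - 2 * Cv \<omega> \<partial>M)"
    by (rule integral_cong_AE[OF bd_meas[OF bVD] bd_meas[OF bT] eVD])
  have "(\<integral>\<omega>. 2 * Cv \<omega> - VS \<omega> \<partial>M) + (\<integral>\<omega>. VS \<omega> + VC \<omega> - 2 * Cv \<omega> \<partial>M)
      = (\<integral>\<omega>. (2 * Cv \<omega> - VS \<omega>) + (VS \<omega> + VC \<omega> - 2 * Cv \<omega>) \<partial>M)"
    by (rule Bochner_Integration.integral_add[symmetric, OF bd_int[OF bR] bd_int[OF bT]])
  also have "\<dots> = (\<integral>\<omega>. VC \<omega> \<partial>M)" by simp
  finally have P1: "- (\<integral>\<omega>. VD \<omega> \<partial>M) + (\<integral>\<omega>. VC \<omega> \<partial>M) = (\<integral>\<omega>. 2 * Cv \<omega> - VS \<omega> \<partial>M)"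
    using iVD by linarith
  have cs: "AE \<omega> in M. \<bar>Cv \<omega>\<bar> \<le> sqrt (VS \<omega>) * sqrt (VC \<omega>)"
    unfolding Cv_def VS_def VC_def by (rule FBp.cond_cs[OF bS bC])
  have vs0: "AE \<omega> in M. 0 \<le> VS \<omega>" unfolding VS_def by (rule FBp.cond_var_nonneg[OF bS])
  have vc0: "AE \<omega> in M. 0 \<le> VC \<omega>" unfolding VC_def by (rule FBp.cond_var_nonneg[OF bC])
  have bL2: "bd M (\<lambda>\<omega>. sqrt (VS \<omega>) * (2 * sqrt (VC \<omega>) + sqrt (VS \<omega>)))"
    by (rule bd_mult[OF sVS bd_add[OF bd_mult[OF bd_const sVC] sVS]])
  have bU2: "bd M (\<lambda>\<omega>. sqrt (VS \<omega>) * (2 * sqrt (VC \<omega>) - sqrt (VS \<omega>)))"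
    by (rule bd_mult[OF sVS bd_diff[OF bd_mult[OF bd_const sVC] sVS]])
  have pw2: "AE \<omega> in M. - (sqrt (VS \<omega>) * (2 * sqrt (VC \<omega>) + sqrt (VS \<omega>))) \<le> 2 * Cv \<omega> - VS \<omega>
        \<and> 2 * Cv \<omega> - VS \<omega> \<le> sqrt (VS \<omega>) * (2 * sqrt (VC \<omega>) - sqrt (VS \<omega>))"
    using cs vs0
  proof eventually_elim
    case (elim \<omega>)
    have ss: "sqrt (VS \<omega>) * sqrt (VS \<omega>) = VS \<omega>" using elim by simp
    have "- (sqrt (VS \<omega>) * (2 * sqrt (VC \<omega>) + sqrt (VS \<omega>)))
        = - 2 * (sqrt (VS \<omega>) * sqrt (VC \<omega>)) - sqrt (VS \<omega>) * sqrt (VS \<omega>)" by (simp add: algebra_simps)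
    moreover have "sqrt (VS \<omega>) * (2 * sqrt (VC \<omega>) - sqrt (VS \<omega>))
        = 2 * (sqrt (VS \<omega>) * sqrt (VC \<omega>)) - sqrt (VS \<omega>) * sqrt (VS \<omega>)" by (simp add: algebra_simps)
    moreover have "Cv \<omega> \<le> sqrt (VS \<omega>) * sqrt (VC \<omega>)" using elim(1) by (rule abs_le_D1)
    moreover have "- Cv \<omega> \<le> sqrt (VS \<omega>) * sqrt (VC \<omega>)" using elim(1) by (rule abs_le_D2)
    ultimately show ?case using ss by linarith
  qed
  have P2: "- (\<integral>\<omega>. sqrt (VS \<omega>) * (2 * sqrt (VC \<omega>) + sqrt (VS \<omega>)) \<partial>M) \<le> (\<integral>\<omega>. 2 * Cv \<omega> - VS \<omega> \<partial>M)"
  proof -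
    have "(\<integral>\<omega>. - (sqrt (VS \<omega>) * (2 * sqrt (VC \<omega>) + sqrt (VS \<omega>))) \<partial>M) \<le> (\<integral>\<omega>. 2 * Cv \<omega> - VS \<omega> \<partial>M)"
      by (rule integral_mono_AE[OF bd_int[OF bd_neg[OF bL2]] bd_int[OF bR]]) (use pw2 in auto)
    then show ?thesis by simp
  qed
  have P3: "(\<integral>\<omega>. 2 * Cv \<omega> - VS \<omega> \<partial>M) \<le> (\<integral>\<omega>. sqrt (VS \<omega>) * (2 * sqrt (VC \<omega>) - sqrt (VS \<omega>)) \<partial>M)"
    by (rule integral_mono_AE[OF bd_int[OF bR] bd_int[OF bU2]]) (use pw2 in auto)
  have P4: "(\<forall>j<J. closure (B j) = {real j / real J .. real (Suc j) / real J}) \<longrightarrow>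
     - (1 / real J) * (\<integral>\<omega>. sqrt (CB \<omega> * (1 - CB \<omega>)) \<partial>M) - 1 / (4 * (real J)\<^sup>2)
        \<le> (\<integral>\<omega>. 2 * Cv \<omega> - VS \<omega> \<partial>M)
     \<and> (\<integral>\<omega>. 2 * Cv \<omega> - VS \<omega> \<partial>M) \<le> (1 / real J) * (\<integral>\<omega>. sqrt (CB \<omega> * (1 - CB \<omega>)) \<partial>M)"
  proof
    assume cl: "\<forall>j<J. closure (B j) = {real j / real J .. real (Suc j) / real J}"
    have subB: "B j \<subseteq> {real j / real J .. real (Suc j) / real J}" if "j < J" for j
      using cl that closure_subset[of "B j"] by auto
    have binj: "AE \<omega> in M. S \<omega> \<in> B j \<longrightarrow> (real j / real J \<le> cj j \<and> cj j \<le> real (Suc j) / real J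
        \<and> (cj j = real (Suc j) / real J \<longrightarrow> S \<omega> = real (Suc j) / real J))" if "j < J" for j
      unfolding cj_def by (rule bin_lemma[OF Sm S01 Bb[OF that] subB[OF that]])
    have binall: "AE \<omega> in M. \<forall>j\<in>{..<J}. S \<omega> \<in> B j \<longrightarrow> (real j / real J \<le> cj j \<and> cj j \<le> real (Suc j) / real J
        \<and> (cj j = real (Suc j) / real J \<longrightarrow> S \<omega> = real (Suc j) / real J))"
      unfolding AE_ball_countable[OF countable_finite[OF finite_lessThan]] using binj by blast
    define a where "a \<omega> = real_of_int \<lfloor>real J * SB \<omega>\<rfloor> / real J" for \<omega>
    define b where "b \<omega> = a \<omega> + 1 / real J" for \<omega>
    have SBF[measurable]: "SB \<in> borel_measurable FB" unfolding FB_def gen_sigma_def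
      by (rule measurable_vimage_algebra1) simp
    have aF: "a \<in> borel_measurable FB" unfolding a_def by measurable
    have bF: "b \<in> borel_measurable FB" unfolding b_def using aF by measurable
    define K where "K = (\<Sum>j<J. \<bar>cj j\<bar>)"
    have SBK: "\<bar>SB \<omega>\<bar> \<le> K" for \<omega>
    proof -
      have "\<bar>SB \<omega>\<bar> \<le> (\<Sum>j<J. \<bar>indicator (B j) (S \<omega>) * cj j\<bar>)" unfolding SBh h_def by (rule sum_abs)
      also have "\<dots> \<le> K" unfolding K_def
        by (rule sum_mono) (auto simp: indicator_def abs_mult)
      finally show ?thesis .
    qed
    have ba: "bd M a" unfolding bd_def
    proof (intro conjI exI[of _ "K + 1"] AE_I2)
      show "a \<in> borel_measurable M" by (rule measurable_from_subalg[OF subFB aF])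
      fix \<omega> show "\<bar>a \<omega>\<bar> \<le> K + 1" unfolding a_def using floor_bound[OF Jpos, of "SB \<omega>"] SBK[of \<omega>] by linarith
    qed
    have bb: "bd M b" unfolding b_def by (rule bd_add[OF ba bd_const])
    have abS: "AE \<omega> in M. a \<omega> \<le> S \<omega> \<and> S \<omega> \<le> b \<omega>"
      using binall AE_space
    proof eventually_elim
      case (elim \<omega>)
      then have "S \<omega> \<in> {0..1}" using S01 by auto
      then have "S \<omega> \<in> (\<Union>j<J. B j)" using assms(9) by simp
      then obtain j where j: "j < J" "S \<omega> \<in> B j" by blast
      have ind: "indicator (B i) (S \<omega>) = (if i = j then 1 else (0::real))" if "i < J" for i
        using assms(8) j that by (auto simp: indicator_def)
      have "SB \<omega> = (\<Sum>i<J. (if i = j then 1 else 0) * cj i)" unfolding SBh h_def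
        by (rule sum.cong) (auto simp: ind)
      also have "\<dots> = (\<Sum>i<J. if i = j then cj i else 0)" by (rule sum.cong) auto
      also have "\<dots> = cj j" using j by simp
      finally have SBj: "SB \<omega> = cj j" .
      have cc: "real j / real J \<le> cj j \<and> cj j \<le> real (Suc j) / real J
        \<and> (cj j = real (Suc j) / real J \<longrightarrow> S \<omega> = real (Suc j) / real J)" using elim j by auto
      have sj: "real j / real J \<le> S \<omega>" "S \<omega> \<le> real (Suc j) / real J" using subB[OF j(1)] j(2) by auto
      show ?case unfolding b_def a_def SBj using floor_case[OF Jpos _ _ sj] cc by blast
    qed
    have bdS: "AE \<omega> in M. VS \<omega> \<le> (real_cond_exp M FB S \<omega> - a \<omega>) * (b \<omega> - real_cond_exp M FB S \<omega>)"
      unfolding VS_def by (rule FBp.bhatia_davis[OF bS ba aF bb bF abS])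
    have VSb: "AE \<omega> in M. VS \<omega> \<le> 1 / (4 * (real J)\<^sup>2)"
      using bdS
    proof eventually_elim
      case (elim \<omega>)
      have "(real_cond_exp M FB S \<omega> - a \<omega>) * (b \<omega> - real_cond_exp M FB S \<omega>)
          \<le> (((real_cond_exp M FB S \<omega> - a \<omega>) + (b \<omega> - real_cond_exp M FB S \<omega>)) / 2)\<^sup>2"
        by (rule am_gm_aux)
      also have "\<dots> = 1 / (4 * (real J)\<^sup>2)" unfolding b_def by (simp add: power2_eq_square)
      finally show ?case using elim by linarith
    qed
    have bdC: "AE \<omega> in M. VC \<omega> \<le> (real_cond_exp M FB C \<omega> - 0) * (1 - real_cond_exp M FB C \<omega>)"
      unfolding VC_def
      by (rule FBp.bhatia_davis[OF bC bd_const _ bd_const]) (use C0 C1 in auto)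
    have tower: "AE \<omega> in M. real_cond_exp M FB C \<omega> = CB \<omega>"
      unfolding Cd CB_def by (rule FBp.real_cond_exp_nested_subalg[OF subS subSFB bd_int[OF bQ]])
    have Jp: "real J > 0" using Jpos by simp
    have sqJ: "sqrt (1 / (4 * (real J)\<^sup>2)) = 1 / (2 * real J)"
      using Jp by (simp add: real_sqrt_divide real_sqrt_mult)
    have pw4: "AE \<omega> in M. - (1 / real J) * sqrt (CB \<omega> * (1 - CB \<omega>)) - 1 / (4 * (real J)\<^sup>2) \<le> 2 * Cv \<omega> - VS \<omega>
       \<and> 2 * Cv \<omega> - VS \<omega> \<le> (1 / real J) * sqrt (CB \<omega> * (1 - CB \<omega>))"
      using VSb bdC tower cs vs0 vc0
    proof eventually_elim
      case (elim \<omega>)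
      have s1: "sqrt (VS \<omega>) \<le> 1 / (2 * real J)"
        using real_sqrt_le_mono[OF elim(1)] sqJ by simp
      have s2: "sqrt (VC \<omega>) \<le> sqrt (CB \<omega> * (1 - CB \<omega>))"
        using elim by (intro real_sqrt_le_mono) simp
      have s0: "0 \<le> sqrt (VS \<omega>)" "0 \<le> sqrt (VC \<omega>)" using elim by auto
      have "sqrt (VS \<omega>) * sqrt (VC \<omega>) \<le> (1 / (2 * real J)) * sqrt (CB \<omega> * (1 - CB \<omega>))"
        by (rule mult_mono[OF s1 s2]) (use Jp s0 in auto)
      then have pr: "2 * (sqrt (VS \<omega>) * sqrt (VC \<omega>)) \<le> (1 / real J) * sqrt (CB \<omega> * (1 - CB \<omega>))"
        by simp
      have "VS \<omega> \<le> 1 / (4 * (real J)\<^sup>2)" using elim by simp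
      then show ?case using pr elim s0 by (auto simp: abs_le_iff)
    qed
    have bsq: "bd M (\<lambda>\<omega>. sqrt (CB \<omega> * (1 - CB \<omega>)))"
      by (rule bd_sqrt[OF bd_mult[OF bCB bd_diff[OF bd_const bCB]]])
    have bU4: "bd M (\<lambda>\<omega>. (1 / real J) * sqrt (CB \<omega> * (1 - CB \<omega>)))" by (rule bd_mult[OF bd_const bsq])
    have bL4: "bd M (\<lambda>\<omega>. - (1 / real J) * sqrt (CB \<omega> * (1 - CB \<omega>)) - 1 / (4 * (real J)\<^sup>2))"
      by (rule bd_diff[OF bd_mult[OF bd_const bsq] bd_const])
    have U4: "(\<integral>\<omega>. 2 * Cv \<omega> - VS \<omega> \<partial>M) \<le> (\<integral>\<omega>. (1 / real J) * sqrt (CB \<omega> * (1 - CB \<omega>)) \<partial>M)"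
      by (rule integral_mono_AE[OF bd_int[OF bR] bd_int[OF bU4]]) (use pw4 in auto)
    have L4: "(\<integral>\<omega>. - (1 / real J) * sqrt (CB \<omega> * (1 - CB \<omega>)) - 1 / (4 * (real J)\<^sup>2) \<partial>M) \<le> (\<integral>\<omega>. 2 * Cv \<omega> - VS \<omega> \<partial>M)"
      by (rule integral_mono_AE[OF bd_int[OF bL4] bd_int[OF bR]]) (use pw4 in auto)
    have L4e: "(\<integral>\<omega>. - (1 / real J) * sqrt (CB \<omega> * (1 - CB \<omega>)) - 1 / (4 * (real J)\<^sup>2) \<partial>M)
        = - (1 / real J) * (\<integral>\<omega>. sqrt (CB \<omega> * (1 - CB \<omega>)) \<partial>M) - 1 / (4 * (real J)\<^sup>2)"
      by (subst Bochner_Integration.integral_diff[OF bd_int[OF bd_mult[OF bd_const bsq]] integrable_const])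
         (simp add: prob_space)
    show "- (1 / real J) * (\<integral>\<omega>. sqrt (CB \<omega> * (1 - CB \<omega>)) \<partial>M) - 1 / (4 * (real J)\<^sup>2)
        \<le> (\<integral>\<omega>. 2 * Cv \<omega> - VS \<omega> \<partial>M)
     \<and> (\<integral>\<omega>. 2 * Cv \<omega> - VS \<omega> \<partial>M) \<le> (1 / real J) * (\<integral>\<omega>. sqrt (CB \<omega> * (1 - CB \<omega>)) \<partial>M)"
      using L4 L4e U4 by simp
  qed
  have ALL: "- (\<integral>\<omega>. VD \<omega> \<partial>M) + (\<integral>\<omega>. VC \<omega> \<partial>M) = (\<integral>\<omega>. 2 * Cv \<omega> - VS \<omega> \<partial>M)
     \<and> - (\<integral>\<omega>. sqrt (VS \<omega>) * (2 * sqrt (VC \<omega>) + sqrt (VS \<omega>)) \<partial>M) \<le> - (\<integral>\<omega>. VD \<omega> \<partial>M) + (\<integral>\<omega>. VC \<omega> \<partial>M)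
     \<and> - (\<integral>\<omega>. VD \<omega> \<partial>M) + (\<integral>\<omega>. VC \<omega> \<partial>M) \<le> (\<integral>\<omega>. sqrt (VS \<omega>) * (2 * sqrt (VC \<omega>) - sqrt (VS \<omega>)) \<partial>M)
     \<and> ((\<forall>j<J. closure (B j) = {real j / real J .. real (Suc j) / real J}) \<longrightarrow>
     - (1 / real J) * (\<integral>\<omega>. sqrt (CB \<omega> * (1 - CB \<omega>)) \<partial>M) - 1 / (4 * (real J)\<^sup>2)
        \<le> - (\<integral>\<omega>. VD \<omega> \<partial>M) + (\<integral>\<omega>. VC \<omega> \<partial>M)
     \<and> - (\<integral>\<omega>. VD \<omega> \<partial>M) + (\<integral>\<omega>. VC \<omega> \<partial>M) \<le> (1 / real J) * (\<integral>\<omega>. sqrt (CB \<omega> * (1 - CB \<omega>)) \<partial>M))"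
    unfolding P1 using P2 P3 P4 by blast
  show ?thesis
    using ALL unfolding Let_def VD_def VC_def VS_def Cv_def CB_def FB_def SB_def C_def Q_def S_def .
qed

end
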